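(* Let $p$ be a prime and $0<\alpha\leq 1$. Then the generic $\alpha$-complexity of the whole field $\mathbb{Z}_p$ satisfies $$\sqrt{2\alpha p}<\mathcal{C}_{\alpha}(\mathbb{Z}_p)\leq 2\lceil\sqrt{\alpha p}\rceil.$$
   Context: $\mathbb{Z}_p$ denotes the field of residues modulo the prime $p$. For a set of pairs $L\subseteq\mathbb{Z}_p^2$, its intersection set is $I(L)=\{x\in\mathbb{Z}_p\mid \exists (a,b),(a',b')\in L \text{ with } (a,b)\neq(a',b') \text{ and } ax+b=a'x+b'\}$. For $S\subseteq\mathbb{Z}_p$ and $0<\alpha\leq1$, the generic $\alpha$-complexity $\mathcal{C}_\alpha(S)$ is the smallest cardinality of a set $L\subseteq\mathbb{Z}_p^2$ with $|S\cap I(L)|\geq\alpha|S|$. *)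

theory Defs
  imports "HOL-Analysis.Analysis"
begin

text \<open>The field Z_p is modelled by the residues {0..<p} (natural numbers) with
  arithmetic mod p; pairs (a,b) represent the lines x \<mapsto> a x + b.\<close>

definition Zp :: "nat \<Rightarrow> nat set" where
  "Zp p = {0..<p}"

definition intersection_set :: "nat \<Rightarrow> (nat \<times> nat) set \<Rightarrow> nat set" where
  "intersection_set p L = {x \<in> Zp p. \<exists>a b a' b'. (a, b) \<in> L \<and> (a', b') \<in> L \<and>
      (a, b) \<noteq> (a', b') \<and> (a * x + b) mod p = (a' * x + b') mod p}"

definition generic_complexity :: "nat \<Rightarrow> real \<Rightarrow> nat set \<Rightarrow> nat" where
  "generic_complexity p \<alpha> S = (LEAST n. \<exists>L. L \<subseteq> Zp p \<times> Zp p \<and> card L = n \<and>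
      real (card (S \<inter> intersection_set p L)) \<ge> \<alpha> * real (card S))"

end

theory Submission
  imports Defs
begin

lemma meet_unique:
  fixes p a b a' b' x y :: nat
  assumes "prime p" "a < p" "a' < p" "b < p" "b' < p" "x < p" "y < p"
    "(a, b) \<noteq> (a', b')"
    "(a * x + b) mod p = (a' * x + b') mod p"
    "(a * y + b) mod p = (a' * y + b') mod p"
  shows "x = y"
proof (rule ccontr)
  assume nxy: "x \<noteq> y"
  have p0: "p > 1" using assms(1) prime_gt_1_nat by blast
  have c1: "int p dvd (int a * int x + int b) - (int a' * int x + int b')"
  proof -
    have "int ((a * x + b) mod p) = int ((a' * x + b') mod p)" using assms(9) by simp
    hence "(int a * int x + int b) mod int p = (int a' * int x + int b') mod int p"
      by (simp add: zmod_int)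
    thus ?thesis by (simp add: mod_eq_dvd_iff)
  qed
  have c2: "int p dvd (int a * int y + int b) - (int a' * int y + int b')"
  proof -
    have "int ((a * y + b) mod p) = int ((a' * y + b') mod p)" using assms(10) by simp
    hence "(int a * int y + int b) mod int p = (int a' * int y + int b') mod int p"
      by (simp add: zmod_int)
    thus ?thesis by (simp add: mod_eq_dvd_iff)
  qed
  have "int p dvd ((int a * int x + int b) - (int a' * int x + int b')) - ((int a * int y + int b) - (int a' * int y + int b'))"
    using c1 c2 dvd_diff by blast
  moreover have "((int a * int x + int b) - (int a' * int x + int b')) - ((int a * int y + int b) - (int a' * int y + int b')) = (int a - int a') * (int x - int y)"
    by (simp add: algebra_simps)
  ultimately have dv: "int p dvd (int a - int a') * (int x - int y)" by simp
  have pr: "prime (int p)" using assms(1) by simp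
  have "\<not> int p dvd (int x - int y)"
  proof
    assume "int p dvd (int x - int y)"
    moreover have "int x - int y \<noteq> 0" using nxy by simp
    moreover have "\<bar>int x - int y\<bar> < int p" using assms(6,7) by linarith
    ultimately show False using dvd_imp_le_int[of "int x - int y" "int p"] by simp
  qed
  hence "int p dvd (int a - int a')" using dv pr prime_dvd_mult_iff by blast
  moreover have "\<bar>int a - int a'\<bar> < int p" using assms(2,3) by linarith
  ultimately have "int a - int a' = 0" using dvd_imp_le_int[of "int a - int a'" "int p"] by fastforce
  hence aa: "a = a'" by simp
  hence "int p dvd int b - int b'" using c1 by simp
  hence "int b mod int p = int b' mod int p" by (simp add: mod_eq_dvd_iff)
  hence "int (b mod p) = int (b' mod p)" by (simp add: zmod_int)
  hence "b mod p = b' mod p" by simp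
  hence "b = b'" using assms(4,5) by simp
  thus False using aa assms(8) by simp
qed

lemma card_I_bound:
  fixes p :: nat and L :: "(nat \<times> nat) set"
  assumes "prime p" "L \<subseteq> Zp p \<times> Zp p"
  shows "card (intersection_set p L) \<le> card L choose 2"
proof -
  have fL: "finite L" using assms(2) finite_subset unfolding Zp_def by blast
  define val where "val = (\<lambda>(l::nat\<times>nat) (x::nat). (fst l * x + snd l) mod p)"
  define Q where "Q = (\<lambda>x A. A \<subseteq> L \<and> card A = 2 \<and> (\<forall>l\<in>A. \<forall>l'\<in>A. val l x = val l' x))"
  define f where "f = (\<lambda>x. SOME A. Q x A)"
  have fQ: "Q x (f x)" if "x \<in> intersection_set p L" for x
  proof -
    have "\<exists>a b a' b'. (a, b) \<in> L \<and> (a', b') \<in> L \<and> (a, b) \<noteq> (a', b') \<and>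
      (a * x + b) mod p = (a' * x + b') mod p"
      using that unfolding intersection_set_def by simp
    then obtain a b a' b' where h: "(a, b) \<in> L" "(a', b') \<in> L" "(a, b) \<noteq> (a', b')"
      "(a * x + b) mod p = (a' * x + b') mod p" by blast
    have "Q x {(a,b),(a',b')}" unfolding Q_def val_def using h by auto
    thus ?thesis unfolding f_def by (rule someI)
  qed
  have "inj_on f (intersection_set p L)"
  proof (rule inj_onI)
    fix x y assume x: "x \<in> intersection_set p L" and y: "y \<in> intersection_set p L"
      and fxy: "f x = f y"
    have Qx: "Q x (f x)" using fQ x by blast
    have Qy: "Q y (f x)" using fQ y fxy by simp
    from Qx have "card (f x) = 2" unfolding Q_def by blast
    then obtain l l' where ll: "f x = {l, l'}" "l \<noteq> l'" by (meson card_2_iff)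
    obtain a b where l: "l = (a,b)" by (cases l)
    obtain a' b' where l': "l' = (a',b')" by (cases l')
    have inL: "l \<in> L" "l' \<in> L" using Qx ll unfolding Q_def by auto
    have "a < p" "b < p" "a' < p" "b' < p" using inL assms(2) l l' unfolding Zp_def by auto
    moreover have "x < p" "y < p" using x y unfolding intersection_set_def Zp_def by auto
    moreover have "val l x = val l' x"
      using Qx ll unfolding Q_def by blast
    hence "(a * x + b) mod p = (a' * x + b') mod p" unfolding val_def l l' by simp
    moreover have "val l y = val l' y"
      using Qy ll unfolding Q_def by blast
    hence "(a * y + b) mod p = (a' * y + b') mod p" unfolding val_def l l' by simp
    ultimately show "x = y" using meet_unique[OF assms(1)] ll l l' by blast
  qed
  moreover have "f ` intersection_set p L \<subseteq> {B. B \<subseteq> L \<and> card B = 2}"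
    using fQ unfolding Q_def by auto
  ultimately have "card (intersection_set p L) \<le> card {B. B \<subseteq> L \<and> card B = 2}"
  proof (rule card_inj_on_le)
    show "finite {B. B \<subseteq> L \<and> card B = 2}" using fL by simp
  qed
  moreover have "card {B. B \<subseteq> L \<and> card B = 2} = card L choose 2" by (rule n_subsets[OF fL])
  ultimately show ?thesis by linarith
qed

theorem proposition2:
  fixes p :: nat and \<alpha> :: real
  assumes "prime p" and "0 < \<alpha>" and "\<alpha> \<le> 1"
  shows "sqrt (2 * \<alpha> * real p) < real (generic_complexity p \<alpha> (Zp p))
       \<and> real (generic_complexity p \<alpha> (Zp p)) \<le> 2 * of_int \<lceil>sqrt (\<alpha> * real p)\<rceil>"
proof -
  define P where "P = (\<lambda>n. \<exists>L. L \<subseteq> Zp p \<times> Zp p \<and> card L = n \<and>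
      real (card (Zp p \<inter> intersection_set p L)) \<ge> \<alpha> * real (card (Zp p)))"
  have gc: "generic_complexity p \<alpha> (Zp p) = (LEAST n. P n)"
    unfolding generic_complexity_def P_def by simp
  have p2: "p \<ge> 2" using assms(1) prime_ge_2_nat by blast
  have cZ: "card (Zp p) = p" unfolding Zp_def by simp
  define k where "k = nat \<lceil>sqrt (\<alpha> * real p)\<rceil>"
  have ap: "\<alpha> * real p > 0" using assms(2) p2 by simp
  have s0: "sqrt (\<alpha> * real p) > 0" using ap by simp
  have kk: "real k = of_int \<lceil>sqrt (\<alpha> * real p)\<rceil>" unfolding k_def using s0 by simp
  have k1: "k \<ge> 1" unfolding k_def using s0 by linarith
  have ksq: "real k \<ge> sqrt (\<alpha> * real p)" using kk by linarith
  have k2: "real k * real k \<ge> \<alpha> * real p"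
  proof -
    have "sqrt (\<alpha> * real p) * sqrt (\<alpha> * real p) \<le> real k * real k"
      using ksq s0 by (meson less_le mult_mono' real_sqrt_ge_zero)
    thus ?thesis using ap by simp
  qed
  have "sqrt (\<alpha> * real p) \<le> sqrt (real p)" using assms(3) p2 by simp
  also have "\<dots> \<le> sqrt (real p * real p)" using p2 by (intro real_sqrt_le_mono) simp
  also have "\<dots> = real p" by simp
  finally have "sqrt (\<alpha> * real p) \<le> real p" .
  hence "\<lceil>sqrt (\<alpha> * real p)\<rceil> \<le> int p" by (metis ceiling_le_iff of_int_of_nat_eq)
  hence "nat \<lceil>sqrt (\<alpha> * real p)\<rceil> \<le> nat (int p)" by (rule nat_mono)
  hence kp: "k \<le> p" unfolding k_def by (simp only: nat_int)
  define A where "A = (\<lambda>j. (0::nat, (j * k) mod p)) ` {0..<k}"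
  define B where "B = (\<lambda>i. (1::nat, (p - i) mod p)) ` {0..<k}"
  have ABsub: "A \<union> B \<subseteq> Zp p \<times> Zp p" unfolding A_def B_def Zp_def using p2 by auto
  have cAB: "card (A \<union> B) \<le> 2 * k"
  proof -
    have "card (A \<union> B) \<le> card A + card B" by (rule card_Un_le)
    also have "\<dots> \<le> k + k"
    proof (rule add_mono)
      show "card A \<le> k" unfolding A_def using card_image_le[of "{0..<k}"] by simp
      show "card B \<le> k" unfolding B_def using card_image_le[of "{0..<k}"] by simp
    qed
    finally show ?thesis by simp
  qed
  have cZZ: "card (Zp p \<times> Zp p) = p * p" unfolding Zp_def by (simp add: card_cartesian_product)
  have "2 * k \<le> p * p" using kp p2 mult_le_mono[of 2 p k p] by simp
  hence "\<exists>C. A \<union> B \<subseteq> C \<and> C \<subseteq> Zp p \<times> Zp p \<and> card C = 2 * k"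
    using exists_subset_between[OF cAB _ ABsub] cZZ unfolding Zp_def by simp
  then obtain L where L: "A \<union> B \<subseteq> L" "L \<subseteq> Zp p \<times> Zp p" "card L = 2 * k"
    by blast
  define m where "m = min (k * k) p"
  have cov: "{0..<m} \<subseteq> Zp p \<inter> intersection_set p L"
  proof
    fix x assume "x \<in> {0..<m}"
    hence x: "x < k * k" "x < p" unfolding m_def by auto
    define j where "j = x div k"
    define i where "i = x mod k"
    have j: "j < k" unfolding j_def using x(1) by (simp add: less_mult_imp_div_less)
    have i: "i < k" unfolding i_def using k1 by simp
    have xe: "x = j * k + i" unfolding i_def j_def by simp
    have ip: "i \<le> p" using i kp by simp
    have inA: "(0, (j * k) mod p) \<in> L" using L(1) j unfolding A_def by auto
    have inB: "(1, (p - i) mod p) \<in> L" using L(1) i unfolding B_def by auto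
    have "(1 * x + (p - i) mod p) mod p = (x + (p - i)) mod p" by (simp add: mod_add_right_eq)
    also have "x + (p - i) = j * k + p" using xe ip by simp
    also have "(j * k + p) mod p = (0 * x + (j * k) mod p) mod p" by simp
    finally have eq: "(0 * x + (j * k) mod p) mod p = (1 * x + (p - i) mod p) mod p" by simp
    have ex: "\<exists>a b a' b'. (a, b) \<in> L \<and> (a', b') \<in> L \<and> (a, b) \<noteq> (a', b') \<and>
      (a * x + b) mod p = (a' * x + b') mod p"
      apply (rule exI[of _ 0], rule exI[of _ "(j*k) mod p"], rule exI[of _ 1], rule exI[of _ "(p-i) mod p"])
      using inA inB eq by (intro conjI) auto
    show "x \<in> Zp p \<inter> intersection_set p L"
      unfolding intersection_set_def Zp_def using ex x(2) by simp
  qed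
  have "real m \<ge> \<alpha> * real p" unfolding m_def
    using k2 assms(3) p2 by (simp add: min_def mult_le_cancel_right1)
  also have "real m \<le> real (card (Zp p \<inter> intersection_set p L))"
    using card_mono[OF _ cov] unfolding Zp_def by simp
  finally have "\<alpha> * real (card (Zp p)) \<le> real (card (Zp p \<inter> intersection_set p L))"
    using cZ by simp
  hence PL: "P (2 * k)" unfolding P_def using L(2,3) by blast
  have up: "(LEAST n. P n) \<le> 2 * k" using PL by (rule Least_le)
  have "P (LEAST n. P n)" using PL by (rule LeastI)
  then obtain L0 where L0: "L0 \<subseteq> Zp p \<times> Zp p" "card L0 = (LEAST n. P n)"
    "real (card (Zp p \<inter> intersection_set p L0)) \<ge> \<alpha> * real (card (Zp p))"
    unfolding P_def by blast
  define n where "n = (LEAST n. P n)"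
  have "card (Zp p \<inter> intersection_set p L0) \<le> card (intersection_set p L0)"
    by (rule card_mono) (auto simp: intersection_set_def Zp_def)
  also have "\<dots> \<le> n choose 2" using card_I_bound[OF assms(1) L0(1)] L0(2) n_def by simp
  finally have "\<alpha> * real p \<le> real (n choose 2)" using L0(3) cZ by simp
  moreover have "2 * (n choose 2) \<le> n * (n - 1)" unfolding choose_two
    by (rule times_div_less_eq_dividend)
  hence "real (2 * (n choose 2)) \<le> real (n * (n - 1))" by (rule of_nat_mono)
  ultimately have h2: "2 * \<alpha> * real p \<le> real (n * (n - 1))" by simp
  have npos: "n \<ge> 1" using h2 ap by (cases n) auto
  have "real (n * (n - 1)) < real n * real n" using npos by (simp add: of_nat_diff algebra_simps)
  hence "2 * \<alpha> * real p < real n ^ 2" using h2 by (simp add: power2_eq_square)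
  hence "sqrt (2 * \<alpha> * real p) < sqrt (real n ^ 2)" by (simp only: real_sqrt_less_iff)
  hence low: "sqrt (2 * \<alpha> * real p) < real n" by simp
  show ?thesis using low up gc n_def kk by simp
qed

end
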